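(* Let $G=(V\cup C,E)$ be a protograph in which every variable node has degree at least $2$, and assume that (1) the degree-2 subgraph $G_2$ contains no cycle, and (2) every degree-2 variable node is joined by a path in $G$ to a variable node of degree at least $3$. Let $\epsilon_{\mathrm{th}}$ be the BEC density evolution threshold of $G$. Then for every $\epsilon$ with $0\le\epsilon<\epsilon_{\mathrm{th}}$ there exist positive constants $\alpha,\beta,K$ and an integer $t_0$ such that $$x_t(i)\le K\exp\!\left(-\beta\, 2^{\alpha t}\right)\qquad\text{for all } 1\le i\le |E| \text{ and all } t\ge t_0 .$$
   Context: A protograph is a finite bipartite multigraph $G=(V\cup C,E)$ with variable (bit) nodes $V$, check nodes $C$, and ordered edges $E=\{e_1,\dots,e_{|E|}\}$; parallel edges between a variable node and a check node are allowed. For an edge $e$, $v(e)$ and $c(e)$ denote its variable-node and check-node endpoints. The degree of a node is the number of incident edges counted with multiplicity. For an edge $e$, $E_c(e)=\{i: c(e_i)=c(e),\ e_i\neq e\}$ and $E_v(e)=\{i: v(e_i)=v(e),\ e_i\ne e\}$. The degree-2 subgraph $G_2$ of $G$ consists of all degree-2 variable nodes, all edges incident to them, and the check nodes incident to those edges; a cycle in $G_2$ may have length $2$ (two parallel edges between the same variable and check node). Protograph density evolution over the binary erasure channel BEC$(\epsilon)$, $\epsilon\in[0,1]$: $x_0(i)=\epsilon$ for all $i$, and for $t\ge 0$, $y_{t+1}(j)=1-\prod_{i\in E_c(e_j)}(1-x_t(i))$, $x_{t+1}(i)=\epsilon\prod_{j\in E_v(e_i)}y_{t+1}(j)$ (empty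 products equal $1$). The threshold is $\epsilon_{\mathrm{th}}=\sup\{\epsilon\in[0,1]: \max_i x_t(i)\to 0 \text{ as } t\to\infty\}$. *)

theory Defs
  imports Complex_Main
begin

text \<open>A protograph with variable nodes V (type 'v), check nodes C (type 'c) and
  ordered edges indexed 0..<m; edge i joins variable node vn i and check node cn i.
  Parallel edges are allowed (vn i = vn j and cn i = cn j with i \<noteq> j).\<close>

definition protograph :: "'v set \<Rightarrow> 'c set \<Rightarrow> nat \<Rightarrow> (nat \<Rightarrow> 'v) \<Rightarrow> (nat \<Rightarrow> 'c) \<Rightarrow> bool" where
  "protograph V C m vn cn \<longleftrightarrow> finite V \<and> finite C \<and> (\<forall>i<m. vn i \<in> V \<and> cn i \<in> C)"

definition vdeg :: "nat \<Rightarrow> (nat \<Rightarrow> 'v) \<Rightarrow> 'v \<Rightarrow> nat" where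
  "vdeg m vn v = card {i. i < m \<and> vn i = v}"

definition Ec :: "nat \<Rightarrow> (nat \<Rightarrow> 'c) \<Rightarrow> nat \<Rightarrow> nat set" where
  "Ec m cn j = {i. i < m \<and> cn i = cn j \<and> i \<noteq> j}"

definition Ev :: "nat \<Rightarrow> (nat \<Rightarrow> 'v) \<Rightarrow> nat \<Rightarrow> nat set" where
  "Ev m vn j = {i. i < m \<and> vn i = vn j \<and> i \<noteq> j}"

definition joins :: "(nat \<Rightarrow> 'v) \<Rightarrow> (nat \<Rightarrow> 'c) \<Rightarrow> nat \<Rightarrow> 'v + 'c \<Rightarrow> 'v + 'c \<Rightarrow> bool" where
  "joins vn cn i a b \<longleftrightarrow>
     (a = Inl (vn i) \<and> b = Inr (cn i)) \<or> (a = Inr (cn i) \<and> b = Inl (vn i))"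

definition G2_edge :: "nat \<Rightarrow> (nat \<Rightarrow> 'v) \<Rightarrow> nat \<Rightarrow> bool" where
  "G2_edge m vn i \<longleftrightarrow> i < m \<and> vdeg m vn (vn i) = 2"

text \<open>A cycle in G_2: k \<ge> 2 distinct edges es and k distinct nodes ns with edge es!j
  joining ns!j and ns!((j+1) mod k). Length-2 cycles (two parallel edges) are included.\<close>
definition has_cycle_G2 :: "nat \<Rightarrow> (nat \<Rightarrow> 'v) \<Rightarrow> (nat \<Rightarrow> 'c) \<Rightarrow> bool" where
  "has_cycle_G2 m vn cn \<longleftrightarrow>
     (\<exists>es ns. length es = length ns \<and> length es \<ge> 2 \<and> distinct es \<and> distinct ns \<and>
        (\<forall>j < length es. G2_edge m vn (es ! j) \<and>
           joins vn cn (es ! j) (ns ! j) (ns ! ((j + 1) mod length es))))"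

definition adjG :: "nat \<Rightarrow> (nat \<Rightarrow> 'v) \<Rightarrow> (nat \<Rightarrow> 'c) \<Rightarrow> ('v + 'c) rel" where
  "adjG m vn cn = {(a, b). \<exists>i<m. joins vn cn i a b}"

text \<open>BEC protograph density evolution: de_x m vn cn eps t i = x_t(i);
  the check-to-variable message y_{t+1}(j) = 1 - prod_{i in E_c(e_j)} (1 - x_t(i)).\<close>
fun de_x :: "nat \<Rightarrow> (nat \<Rightarrow> 'v) \<Rightarrow> (nat \<Rightarrow> 'c) \<Rightarrow> real \<Rightarrow> nat \<Rightarrow> nat \<Rightarrow> real" where
  "de_x m vn cn eps 0 i = eps"
| "de_x m vn cn eps (Suc t) i =
     eps * (\<Prod>j\<in>Ev m vn i. 1 - (\<Prod>k\<in>Ec m cn j. 1 - de_x m vn cn eps t k))"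

definition de_y :: "nat \<Rightarrow> (nat \<Rightarrow> 'v) \<Rightarrow> (nat \<Rightarrow> 'c) \<Rightarrow> real \<Rightarrow> nat \<Rightarrow> nat \<Rightarrow> real" where
  "de_y m vn cn eps t j = 1 - (\<Prod>k\<in>Ec m cn j. 1 - de_x m vn cn eps (t - 1) k)"

definition threshold :: "nat \<Rightarrow> (nat \<Rightarrow> 'v) \<Rightarrow> (nat \<Rightarrow> 'c) \<Rightarrow> real" where
  "threshold m vn cn =
     Sup {eps. 0 \<le> eps \<and> eps \<le> 1 \<and>
               (\<lambda>t. Max ((\<lambda>i. de_x m vn cn eps t i) ` {..<m})) \<longlonglongrightarrow> 0}"

end

theory Submission
  imports Defs
begin

lemma one_minus_prod_le_sum:
  fixes a :: "'a \<Rightarrow> real"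
  assumes "finite A" "\<forall>k\<in>A. 0 \<le> a k \<and> a k \<le> 1"
  shows "1 - (\<Prod>k\<in>A. 1 - a k) \<le> (\<Sum>k\<in>A. a k)"
  using assms
proof (induction A rule: finite_induct)
  case empty then show ?case by simp
next
  case (insert x F)
  have P: "0 \<le> (\<Prod>k\<in>F. 1 - a k)" "(\<Prod>k\<in>F. 1 - a k) \<le> 1"
    using insert.prems by (auto intro: prod_nonneg prod_le_1)
  have ax: "0 \<le> a x" "a x \<le> 1" using insert.prems by auto
  have IH: "1 - (\<Prod>k\<in>F. 1 - a k) \<le> (\<Sum>k\<in>F. a k)" using insert by auto
  have "1 - (\<Prod>k\<in>insert x F. 1 - a k) = 1 - (1 - a x) * (\<Prod>k\<in>F. 1 - a k)"
    using insert.hyps by simp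
  also have "\<dots> \<le> a x + (1 - (\<Prod>k\<in>F. 1 - a k))"
    using P ax mult_left_le[of "\<Prod>k\<in>F. 1 - a k" "a x"] by (simp add: algebra_simps)
  also have "\<dots> \<le> (\<Sum>k\<in>insert x F. a k)" using IH insert.hyps by simp
  finally show ?case .
qed

lemma finite_Ec[simp]: "finite (Ec m cn j)" unfolding Ec_def by auto
lemma finite_Ev[simp]: "finite (Ev m vn j)" unfolding Ev_def by auto
lemma Ec_sub: "Ec m cn j \<subseteq> {..<m}" unfolding Ec_def by auto
lemma Ev_sub: "Ev m vn j \<subseteq> {..<m}" unfolding Ev_def by auto
lemma card_Ec: "card (Ec m cn j) \<le> m"
  using card_mono[OF _ Ec_sub, of m cn j] by simp

lemma de_x_bounds:
  assumes "0 \<le> eps" "eps \<le> 1"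
  shows "0 \<le> de_x m vn cn eps t i \<and> de_x m vn cn eps t i \<le> eps"
proof (induction t arbitrary: i)
  case 0 then show ?case using assms by simp
next
  case (Suc t)
  have Y: "0 \<le> 1 - (\<Prod>k\<in>Ec m cn j. 1 - de_x m vn cn eps t k) \<and>
           1 - (\<Prod>k\<in>Ec m cn j. 1 - de_x m vn cn eps t k) \<le> 1" for j
  proof -
    have le1: "de_x m vn cn eps t k \<le> 1" for k using Suc[of k] assms by linarith
    have "0 \<le> (\<Prod>k\<in>Ec m cn j. 1 - de_x m vn cn eps t k)"
         "(\<Prod>k\<in>Ec m cn j. 1 - de_x m vn cn eps t k) \<le> 1"
      using Suc le1 by (auto intro!: prod_nonneg prod_le_1)
    then show ?thesis by simp
  qed
  have "0 \<le> (\<Prod>j\<in>Ev m vn i. 1 - (\<Prod>k\<in>Ec m cn j. 1 - de_x m vn cn eps t k))"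
       "(\<Prod>j\<in>Ev m vn i. 1 - (\<Prod>k\<in>Ec m cn j. 1 - de_x m vn cn eps t k)) \<le> 1"
    using Y by (auto intro!: prod_nonneg prod_le_1)
  then show ?case using assms by (simp add: mult_left_le)
qed

lemma de_x_step_mono:
  assumes "0 \<le> e1" "e1 \<le> e2" "e2 \<le> 1"
    "\<forall>k. de_x m vn cn e1 s k \<le> de_x m vn cn e2 t k"
  shows "de_x m vn cn e1 (Suc s) i \<le> de_x m vn cn e2 (Suc t) i"
proof -
  have b1: "0 \<le> de_x m vn cn e1 s k \<and> de_x m vn cn e1 s k \<le> 1" for k
    using de_x_bounds[of e1 m vn cn s k] assms by auto
  have b2: "0 \<le> de_x m vn cn e2 t k \<and> de_x m vn cn e2 t k \<le> 1" for k
    using de_x_bounds[of e2 m vn cn t k] assms by auto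
  have Y: "0 \<le> 1 - (\<Prod>k\<in>Ec m cn j. 1 - de_x m vn cn e1 s k) \<and>
           1 - (\<Prod>k\<in>Ec m cn j. 1 - de_x m vn cn e1 s k) \<le>
           1 - (\<Prod>k\<in>Ec m cn j. 1 - de_x m vn cn e2 t k)" for j
  proof -
    have "(\<Prod>k\<in>Ec m cn j. 1 - de_x m vn cn e1 s k) \<le> 1"
      using b1 by (auto intro!: prod_le_1)
    moreover have "(\<Prod>k\<in>Ec m cn j. 1 - de_x m vn cn e2 t k) \<le> (\<Prod>k\<in>Ec m cn j. 1 - de_x m vn cn e1 s k)"
      using b1 b2 assms(4) by (intro prod_mono) auto
    ultimately show ?thesis by simp
  qed
  have P: "(\<Prod>j\<in>Ev m vn i. 1 - (\<Prod>k\<in>Ec m cn j. 1 - de_x m vn cn e1 s k)) \<le>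
           (\<Prod>j\<in>Ev m vn i. 1 - (\<Prod>k\<in>Ec m cn j. 1 - de_x m vn cn e2 t k))"
    using Y by (intro prod_mono) auto
  have "0 \<le> (\<Prod>j\<in>Ev m vn i. 1 - (\<Prod>k\<in>Ec m cn j. 1 - de_x m vn cn e1 s k))"
    using Y by (auto intro!: prod_nonneg)
  then show ?thesis using P assms by (simp add: mult_mono)
qed

lemma de_x_mono_eps:
  assumes "0 \<le> e1" "e1 \<le> e2" "e2 \<le> 1"
  shows "de_x m vn cn e1 t i \<le> de_x m vn cn e2 t i"
  using assms
proof (induction t arbitrary: i)
  case 0 then show ?case by simp
next
  case (Suc t) then show ?case using de_x_step_mono[of e1 e2] by blast
qed

lemma de_x_dec1:
  assumes "0 \<le> eps" "eps \<le> 1"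
  shows "de_x m vn cn eps (Suc t) i \<le> de_x m vn cn eps t i"
proof (induction t arbitrary: i)
  case 0 then show ?case using de_x_bounds[OF assms, of m vn cn "Suc 0" i] by simp
next
  case (Suc t) then show ?case using de_x_step_mono[of eps eps] assms by blast
qed

lemma de_x_dec:
  assumes "0 \<le> eps" "eps \<le> 1" "t \<le> t'"
  shows "de_x m vn cn eps t' i \<le> de_x m vn cn eps t i"
  using assms(3)
proof (induction t' rule: dec_induct)
  case base then show ?case by simp
next
  case (step n) then show ?case using de_x_dec1[OF assms(1,2), of m vn cn n i] by linarith
qed

lemma joins_neq: "joins vn cn i p q \<Longrightarrow> p \<noteq> q"
  unfolding joins_def by auto

lemma joins_same: "joins vn cn i p q \<Longrightarrow> joins vn cn i p' q' \<Longrightarrow>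
   (p = p' \<and> q = q') \<or> (p = q' \<and> q = p')"
  unfolding joins_def by auto

lemma walk_cycle:
  fixes w :: "nat \<Rightarrow> 'v + 'c" and e :: "nat \<Rightarrow> nat" and vn :: "nat \<Rightarrow> 'v" and cn :: "nat \<Rightarrow> 'c"
  assumes n0: "0 < n"
    and J: "\<forall>k<n. G2_edge m vn (e k) \<and> joins vn cn (e k) (w k) (w (Suc k))"
    and NB: "\<forall>k. Suc k < n \<longrightarrow> e k \<noteq> e (Suc k)"
    and cl: "w 0 = w n"
  shows "has_cycle_G2 m vn cn"
proof -
  let ?P = "\<lambda>d. \<exists>a. 0 < d \<and> a + d \<le> n \<and> w a = w (a + d)"
  have ex: "?P n" using n0 cl by (intro exI[of _ 0]) simp
  define d where "d = (LEAST d. ?P d)"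
  have Pd: "?P d" unfolding d_def using LeastI_ex[of ?P] ex by blast
  then obtain a where a: "0 < d" "a + d \<le> n" "w a = w (a + d)" by blast
  have mn: "d \<le> d'" if "0 < d'" "a' + d' \<le> n" "w a' = w (a' + d')" for a' d'
    unfolding d_def using that by (intro Least_le) blast
  have nd: "w k \<noteq> w l" if "a \<le> k" "k < l" "l \<le> a + d" "l - k < d" for k l
  proof
    assume "w k = w l"
    then have "d \<le> l - k" using mn[of "l - k" k] that a by auto
    then show False using that by simp
  qed
  have d2: "2 \<le> d"
  proof (rule ccontr)
    assume "\<not> 2 \<le> d"
    then have "d = 1" using a by simp
    then have "a < n" using a by simp
    then have "joins vn cn (e a) (w a) (w (Suc a))" using J by blast
    then show False using joins_neq a \<open>d = 1\<close> by fastforce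
  qed
  define es where "es = map (\<lambda>k. e (a + k)) [0..<d]"
  define ns where "ns = map (\<lambda>k. w (a + k)) [0..<d]"
  have len: "length es = d" "length ns = d" unfolding es_def ns_def by auto
  have dns: "distinct ns"
    unfolding ns_def distinct_conv_nth
  proof (intro allI impI)
    fix i j assume ij: "i < length (map (\<lambda>k. w (a + k)) [0..<d])"
      "j < length (map (\<lambda>k. w (a + k)) [0..<d])" "i \<noteq> j"
    then have "i < d" "j < d" by auto
    then show "map (\<lambda>k. w (a + k)) [0..<d] ! i \<noteq> map (\<lambda>k. w (a + k)) [0..<d] ! j"
    proof (cases "i < j")
      case True then show ?thesis using \<open>j < d\<close> nd[of "a+i" "a+j"] by auto
    next
      case False then have "j < i" using ij(3) by simp
      then have "w (a+j) \<noteq> w (a+i)" using \<open>i < d\<close> nd[of "a+j" "a+i"] by auto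
      then have "w (a+i) \<noteq> w (a+j)" by metis
      then show ?thesis using \<open>i < d\<close> \<open>j < d\<close> by simp
    qed
  qed
  have des: "distinct es"
    unfolding es_def distinct_conv_nth
  proof (intro allI impI)
    fix i j assume ij: "i < length (map (\<lambda>k. e (a + k)) [0..<d])"
      "j < length (map (\<lambda>k. e (a + k)) [0..<d])" "i \<noteq> j"
    then have ijd: "i < d" "j < d" by auto
    have gen: "e (a + i) \<noteq> e (a + j)" if "i < j" "j < d" for i j
    proof
      assume eq: "e (a + i) = e (a + j)"
      have j1: "joins vn cn (e (a+i)) (w (a+i)) (w (Suc (a+i)))" using J that a by auto
      have j2: "joins vn cn (e (a+i)) (w (a+j)) (w (Suc (a+j)))" using J that a eq by auto
      from joins_same[OF j1 j2] show False
      proof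
        assume "w (a + i) = w (a + j) \<and> w (Suc (a + i)) = w (Suc (a + j))"
        then show False using nd[of "a+i" "a+j"] that by auto
      next
        assume h: "w (a + i) = w (Suc (a + j)) \<and> w (Suc (a + i)) = w (a + j)"
        show False
        proof (cases "Suc i < j")
          case True then show ?thesis using h nd[of "Suc (a+i)" "a+j"] that by auto
        next
          case False
          then have "j = Suc i" using that by simp
          then show ?thesis using NB eq that a by (metis add_Suc_right add_lessD1 add_less_cancel_left less_le_trans)
        qed
      qed
    qed
    show "map (\<lambda>k. e (a + k)) [0..<d] ! i \<noteq> map (\<lambda>k. e (a + k)) [0..<d] ! j"
      using ijd ij(3) gen[of i j] gen[of j i] by (cases "i < j") auto
  qed
  have jn: "\<forall>j < length es. G2_edge m vn (es ! j) \<and>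
           joins vn cn (es ! j) (ns ! j) (ns ! ((j + 1) mod length es))"
  proof (intro allI impI)
    fix j assume "j < length es"
    then have jd: "j < d" using len by simp
    have J1: "G2_edge m vn (e (a+j)) \<and> joins vn cn (e (a+j)) (w (a+j)) (w (Suc (a+j)))"
      using J jd a by auto
    have "ns ! ((j + 1) mod length es) = w (Suc (a + j))"
    proof (cases "j + 1 < d")
      case True then show ?thesis using len by (simp add: ns_def)
    next
      case False then have "j + 1 = d" using jd by simp
      then have "Suc (a + j) = a + d" by simp
      have "ns ! ((j + 1) mod length es) = ns ! 0" using len \<open>j + 1 = d\<close> by simp
      also have "\<dots> = w a" using a(1) by (simp add: ns_def)
      also have "\<dots> = w (Suc (a + j))" using a(3) \<open>Suc (a + j) = a + d\<close> by metis
      finally show ?thesis .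
    qed
    then show "G2_edge m vn (es ! j) \<and>
           joins vn cn (es ! j) (ns ! j) (ns ! ((j + 1) mod length es))"
      using J1 jd by (simp add: es_def ns_def)
  qed
  show ?thesis unfolding has_cycle_G2_def
    using len d2 des dns jn by (intro exI[of _ es] exI[of _ ns]) auto
qed

locale pg =
  fixes V :: "'v set" and C :: "'c set" and m :: nat
    and vn :: "nat \<Rightarrow> 'v" and cn :: "nat \<Rightarrow> 'c"
  assumes pgr: "protograph V C m vn cn"
    and dg: "\<forall>v\<in>V. vdeg m vn v \<ge> 2"
    and nc: "\<not> has_cycle_G2 m vn cn"
begin

definition oth :: "nat \<Rightarrow> nat" where "oth i = (SOME j. j \<in> Ev m vn i)"

definition R :: "nat \<Rightarrow> nat \<Rightarrow> bool" where
  "R k i \<longleftrightarrow> i < m \<and> k < m \<and> vdeg m vn (vn i) = 2 \<and> vdeg m vn (vn k) = 2 \<and> k \<in> Ec m cn (oth i)"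

lemma deg2: "i < m \<Longrightarrow> vdeg m vn (vn i) \<ge> 2"
  using pgr dg unfolding protograph_def by auto

lemma card_Ev: "i < m \<Longrightarrow> card (Ev m vn i) = vdeg m vn (vn i) - 1"
proof -
  assume "i < m"
  have "Ev m vn i = {k. k < m \<and> vn k = vn i} - {i}" unfolding Ev_def by auto
  moreover have "i \<in> {k. k < m \<and> vn k = vn i}" using \<open>i < m\<close> by simp
  moreover have "finite {k. k < m \<and> vn k = vn i}" by simp
  ultimately show ?thesis unfolding vdeg_def by (simp only: card_Diff_singleton)
qed

lemma Ev_oth: assumes "i < m" "vdeg m vn (vn i) = 2" shows "Ev m vn i = {oth i}"
proof -
  have "card (Ev m vn i) = Suc 0" using card_Ev assms by simp
  then obtain j where j: "Ev m vn i = {j}" using card_1_singleton_iff[of "Ev m vn i"] by blast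
  then have "oth i = j" unfolding oth_def by (simp only: singleton_iff some_eq_trivial)
  then show ?thesis using j by simp
qed

lemma oth_props: assumes "i < m" "vdeg m vn (vn i) = 2"
  shows "oth i < m" "vn (oth i) = vn i" "oth i \<noteq> i"
proof -
  have "oth i \<in> Ev m vn i" using Ev_oth[OF assms] by simp
  then show "oth i < m" "vn (oth i) = vn i" "oth i \<noteq> i" unfolding Ev_def by auto
qed

lemma chain_cycle:
  assumes ch: "\<forall>a<p. R (c a) (c (Suc a))" and p0: "0 < p" and cl: "c 0 = c p"
  shows False
proof -
  define w :: "nat \<Rightarrow> 'v + 'c" where
    "w k = (if even k then Inl (vn (c (k div 2))) else Inr (cn (c (k div 2))))" for k
  define e where "e k = (if even k then c (k div 2) else oth (c (Suc (k div 2))))" for k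
  have J: "\<forall>k<2*p. G2_edge m vn (e k) \<and> joins vn cn (e k) (w k) (w (Suc k))"
  proof (intro allI impI)
    fix k assume k: "k < 2*p"
    define q where "q = k div 2"
    have q: "q < p" using k q_def by simp
    have Rq: "R (c q) (c (Suc q))" using ch q by simp
    then have r: "c q < m" "c (Suc q) < m" "vdeg m vn (vn (c q)) = 2" "vdeg m vn (vn (c (Suc q))) = 2"
      "c q \<in> Ec m cn (oth (c (Suc q)))" unfolding R_def by auto
    have o: "oth (c (Suc q)) < m" "vn (oth (c (Suc q))) = vn (c (Suc q))"
      using oth_props[OF r(2) r(4)] by auto
    have ec: "cn (c q) = cn (oth (c (Suc q)))" using r(5) unfolding Ec_def by auto
    show "G2_edge m vn (e k) \<and> joins vn cn (e k) (w k) (w (Suc k))"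
    proof (cases "even k")
      case True
      then have "k = 2*q" "Suc k div 2 = q" using q_def by auto
      then show ?thesis using True r unfolding e_def w_def G2_edge_def joins_def by auto
    next
      case False
      then have "k = 2*q + 1" "Suc k div 2 = Suc q" using q_def by presburger+
      then show ?thesis using False r o ec unfolding e_def w_def G2_edge_def joins_def by auto
    qed
  qed
  have NB: "\<forall>k. Suc k < 2*p \<longrightarrow> e k \<noteq> e (Suc k)"
  proof (intro allI impI)
    fix k assume k: "Suc k < 2*p"
    define q where "q = k div 2"
    have q: "q < p" using k q_def by simp
    have Rq: "R (c q) (c (Suc q))" using ch q by simp
    then have r: "c q < m" "c (Suc q) < m" "vdeg m vn (vn (c q)) = 2" "vdeg m vn (vn (c (Suc q))) = 2"
      "c q \<in> Ec m cn (oth (c (Suc q)))" unfolding R_def by auto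
    have o: "oth (c (Suc q)) \<noteq> c (Suc q)" using oth_props[OF r(2) r(4)] by auto
    have ec: "c q \<noteq> oth (c (Suc q))" using r(5) unfolding Ec_def by auto
    show "e k \<noteq> e (Suc k)"
    proof (cases "even k")
      case True
      then have "k = 2*q" "Suc k div 2 = q" using q_def by auto
      then show ?thesis using True ec unfolding e_def by auto
    next
      case False
      then have "k = 2*q + 1" "Suc k div 2 = Suc q" using q_def by presburger+
      then show ?thesis using False o unfolding e_def by auto
    qed
  qed
  have "w 0 = w (2*p)" unfolding w_def using cl by simp
  moreover have "0 < 2*p" using p0 by simp
  ultimately have "has_cycle_G2 m vn cn" using walk_cycle[of "2*p" m vn e cn w] J NB by blast
  then show False using nc by simp
qed

lemma no_long_chain:
  assumes "\<forall>a\<le>m. c a < m" "\<forall>a<m. R (c a) (c (Suc a))"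
  shows False
proof -
  have "c ` {..m} \<subseteq> {..<m}" using assms(1) by auto
  then have "card (c ` {..m}) \<le> m" using card_mono[of "{..<m}"] by fastforce
  then have "\<not> inj_on c {..m}" using card_image[of c "{..m}"] by auto
  then obtain a b where ab: "a \<le> m" "b \<le> m" "a \<noteq> b" "c a = c b" unfolding inj_on_def by auto
  have gen: False if "a < b" "b \<le> m" "c a = c b" for a b
  proof -
    have "\<forall>k<b - a. R (c (a + k)) (c (Suc (a + k)))" using assms(2) that by auto
    then show False using chain_cycle[of "b - a" "\<lambda>k. c (a + k)"] that by auto
  qed
  show False
  proof (cases "a < b")
    case True then show False using ab gen[of a b] by blast
  next
    case False then have "b < a" using ab by simp
    then show False using ab gen[of b a] by simp
  qed
qed

end

lemma Y_le:
  assumes "0 \<le> eps" "eps \<le> 1" "0 \<le> B" "\<forall>k\<in>Ec m cn j. de_x m vn cn eps s k \<le> B"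
  shows "0 \<le> 1 - (\<Prod>k\<in>Ec m cn j. 1 - de_x m vn cn eps s k) \<and>
         1 - (\<Prod>k\<in>Ec m cn j. 1 - de_x m vn cn eps s k) \<le> 1 \<and>
         1 - (\<Prod>k\<in>Ec m cn j. 1 - de_x m vn cn eps s k) \<le> real m * B"
proof -
  have b: "0 \<le> de_x m vn cn eps s k \<and> de_x m vn cn eps s k \<le> 1" for k
    using de_x_bounds[OF assms(1,2), of m vn cn s k] assms(2) by linarith
  have p: "0 \<le> (\<Prod>k\<in>Ec m cn j. 1 - de_x m vn cn eps s k)"
          "(\<Prod>k\<in>Ec m cn j. 1 - de_x m vn cn eps s k) \<le> 1"
    using b by (auto intro!: prod_nonneg prod_le_1)
  have "1 - (\<Prod>k\<in>Ec m cn j. 1 - de_x m vn cn eps s k) \<le> (\<Sum>k\<in>Ec m cn j. de_x m vn cn eps s k)"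
    using b by (intro one_minus_prod_le_sum) auto
  also have "\<dots> \<le> (\<Sum>k\<in>Ec m cn j. B)" using assms(4) by (intro sum_mono) auto
  also have "\<dots> = real (card (Ec m cn j)) * B" by simp
  also have "\<dots> \<le> real m * B" using card_Ec[of m cn j] assms(3) by (intro mult_right_mono) auto
  finally show ?thesis using p by simp
qed

context pg begin

lemma deg3_bound:
  assumes e: "0 \<le> eps" "eps \<le> 1" and u: "0 \<le> u" and hb: "\<forall>k<m. de_x m vn cn eps s k \<le> u"
    and i: "i < m" "vdeg m vn (vn i) \<ge> 3"
  shows "de_x m vn cn eps (Suc s) i \<le> (real m * u)^2"
proof -
  define Y where "Y j = 1 - (\<Prod>k\<in>Ec m cn j. 1 - de_x m vn cn eps s k)" for j
  have Yb: "0 \<le> Y j \<and> Y j \<le> 1 \<and> Y j \<le> real m * u" for j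
  proof -
    have "\<forall>k\<in>Ec m cn j. de_x m vn cn eps s k \<le> u" using hb Ec_sub by blast
    then show ?thesis unfolding Y_def using Y_le[OF e u] by blast
  qed
  define A where "A = Ev m vn i"
  have fA: "finite A" unfolding A_def by simp
  have cA: "card A \<ge> 2" using card_Ev[OF i(1)] i(2) unfolding A_def by simp
  then have "A \<noteq> {}" by auto
  then obtain j1 where j1: "j1 \<in> A" by auto
  have "card (A - {j1}) \<ge> 1" using cA j1 fA by simp
  then have "A - {j1} \<noteq> {}" by (metis card.empty not_one_le_zero)
  then obtain j2 where j2: "j2 \<in> A - {j1}" by auto
  have r: "0 \<le> prod Y (A - {j1} - {j2}) \<and> prod Y (A - {j1} - {j2}) \<le> 1"
    using Yb by (auto intro!: prod_nonneg prod_le_1)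
  have "prod Y A = Y j1 * prod Y (A - {j1})" using prod.remove[OF fA j1] .
  also have "prod Y (A - {j1}) = Y j2 * prod Y (A - {j1} - {j2})"
    using prod.remove[of "A - {j1}" j2 Y] fA j2 by simp
  finally have pA: "prod Y A = Y j1 * Y j2 * prod Y (A - {j1} - {j2})" by simp
  have y12: "0 \<le> Y j1 * Y j2" using Yb by simp
  have "prod Y A \<le> Y j1 * Y j2" unfolding pA using y12 r by (simp add: mult_left_le)
  also have "\<dots> \<le> (real m * u) * (real m * u)" using Yb u by (intro mult_mono) auto
  finally have pl: "prod Y A \<le> (real m * u)^2" by (simp add: power2_eq_square)
  have p0: "0 \<le> prod Y A" using Yb by (auto intro!: prod_nonneg)
  have "de_x m vn cn eps (Suc s) i = eps * prod Y A" unfolding Y_def A_def by simp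
  also have "\<dots> \<le> prod Y A" using e p0 by (simp add: mult_left_le_one_le)
  finally show ?thesis using pl by simp
qed

lemma deg2_eq:
  assumes "i < m" "vdeg m vn (vn i) = 2"
  shows "de_x m vn cn eps (Suc s) i = eps * (1 - (\<Prod>k\<in>Ec m cn (oth i). 1 - de_x m vn cn eps s k))"
  using Ev_oth[OF assms] by simp

lemma deg2_bound:
  assumes e: "0 \<le> eps" "eps \<le> 1" and B: "0 \<le> B" and i: "i < m" "vdeg m vn (vn i) = 2"
    and hb: "\<forall>k\<in>Ec m cn (oth i). de_x m vn cn eps s k \<le> B"
  shows "de_x m vn cn eps (Suc s) i \<le> real m * B"
proof -
  have Y: "0 \<le> 1 - (\<Prod>k\<in>Ec m cn (oth i). 1 - de_x m vn cn eps s k) \<and>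
         1 - (\<Prod>k\<in>Ec m cn (oth i). 1 - de_x m vn cn eps s k) \<le> real m * B"
    using Y_le[OF e B hb] by blast
  then show ?thesis unfolding deg2_eq[OF i] using e
    by (meson dual_order.trans mult_left_le_one_le)
qed

end

lemma pw_mono: "0 < m \<Longrightarrow> a \<le> b \<Longrightarrow> real m ^ a * u^2 \<le> real m ^ b * (u::real)^2"
  by (intro mult_right_mono power_increasing) auto

lemma sq_eq: "(real m * u)^2 = real m ^ 2 * (u::real)^2"
  by (simp add: power_mult_distrib)

context pg begin

lemma Q:
  assumes e: "0 \<le> eps" "eps \<le> 1" and u: "0 \<le> u"
    and hb: "\<forall>s\<ge>t. \<forall>k<m. de_x m vn cn eps s k \<le> u"
  shows "\<forall>i<m. de_x m vn cn eps (t + n + 2) i \<le> real m ^ (n+3) * u^2 \<or>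
          (\<exists>c. c n = i \<and> (\<forall>a\<le>n. c a < m) \<and> (\<forall>a<n. R (c a) (c (Suc a))))"
proof (induction n)
  case 0
  show ?case
  proof (intro allI impI)
    fix i assume i: "i < m"
    show "de_x m vn cn eps (t + 0 + 2) i \<le> real m ^ (0+3) * u^2 \<or>
          (\<exists>c. c 0 = i \<and> (\<forall>a\<le>0. c a < m) \<and> (\<forall>a<0. R (c a) (c (Suc a))))"
    proof (cases "vdeg m vn (vn i) = 2")
      case True then show ?thesis using i by (intro disjI2 exI[of _ "\<lambda>_. i"]) auto
    next
      case False
      then have d3: "vdeg m vn (vn i) \<ge> 3" using deg2[OF i] by simp
      have "\<forall>k<m. de_x m vn cn eps (t+1) k \<le> u" using hb by (simp del: de_x.simps)
      then have "de_x m vn cn eps (Suc (t+1)) i \<le> (real m * u)^2"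
        using deg3_bound[OF e u _ i d3] by blast
      also have "\<dots> \<le> real m ^ (0+3) * u^2" unfolding sq_eq using pw_mono[of m 2 "0+3" u] i by simp
      finally show ?thesis by simp
    qed
  qed
next
  case (Suc n)
  show ?case
  proof (intro allI impI)
    fix i assume i: "i < m"
    have m0: "0 < m" using i by simp
    show "de_x m vn cn eps (t + Suc n + 2) i \<le> real m ^ (Suc n+3) * u^2 \<or>
          (\<exists>c. c (Suc n) = i \<and> (\<forall>a\<le>Suc n. c a < m) \<and> (\<forall>a<Suc n. R (c a) (c (Suc a))))"
    proof (cases "vdeg m vn (vn i) = 2")
      case False
      then have d3: "vdeg m vn (vn i) \<ge> 3" using deg2[OF i] by simp
      have "\<forall>k<m. de_x m vn cn eps (t+n+2) k \<le> u" using hb by (simp del: de_x.simps)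
      then have "de_x m vn cn eps (Suc (t+n+2)) i \<le> (real m * u)^2"
        using deg3_bound[OF e u _ i d3] by blast
      also have "\<dots> \<le> real m ^ (Suc n+3) * u^2" unfolding sq_eq using pw_mono[of m 2 "Suc n+3" u] m0 by simp
      finally show ?thesis by simp
    next
      case True
      note i2 = True
      show ?thesis
      proof (cases "\<exists>k\<in>Ec m cn (oth i). vdeg m vn (vn k) = 2 \<and>
              (\<exists>c. c n = k \<and> (\<forall>a\<le>n. c a < m) \<and> (\<forall>a<n. R (c a) (c (Suc a))))")
        case True
        then obtain k c where k: "k \<in> Ec m cn (oth i)" "vdeg m vn (vn k) = 2"
          and c: "c n = k" "\<forall>a\<le>n. c a < m" "\<forall>a<n. R (c a) (c (Suc a))" by blast
        have km: "k < m" using k(1) Ec_sub by blast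
        define c' where "c' = c(Suc n := i)"
        have "c' (Suc n) = i" unfolding c'_def by simp
        moreover have "\<forall>a\<le>Suc n. c' a < m" unfolding c'_def using c(2) i by (auto simp: le_Suc_eq)
        moreover have "\<forall>a<Suc n. R (c' a) (c' (Suc a))"
        proof (intro allI impI)
          fix a assume a: "a < Suc n"
          show "R (c' a) (c' (Suc a))"
          proof (cases "a < n")
            case True then show ?thesis using c(3) unfolding c'_def by simp
          next
            case False then have "a = n" using a by simp
            then show ?thesis unfolding c'_def R_def using c(1) k km i i2 by simp
          qed
        qed
        ultimately show ?thesis by blast
      next
        case False
        have kb: "\<forall>k\<in>Ec m cn (oth i). de_x m vn cn eps (t+n+2) k \<le> real m ^ (n+3) * u^2"
        proof
          fix k assume k: "k \<in> Ec m cn (oth i)"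
          have km: "k < m" using k Ec_sub by blast
          show "de_x m vn cn eps (t+n+2) k \<le> real m ^ (n+3) * u^2"
          proof (cases "vdeg m vn (vn k) = 2")
            case True
            then show ?thesis using Suc.IH km False k by blast
          next
            case False
            then have d3: "vdeg m vn (vn k) \<ge> 3" using deg2[OF km] by simp
            have "\<forall>k<m. de_x m vn cn eps (t+n+1) k \<le> u" using hb by (simp del: de_x.simps)
            then have "de_x m vn cn eps (Suc (t+n+1)) k \<le> (real m * u)^2"
              using deg3_bound[OF e u _ km d3] by blast
            also have "\<dots> \<le> real m ^ (n+3) * u^2" unfolding sq_eq using pw_mono[of m 2 "n+3" u] m0 by simp
            finally show ?thesis by (simp add: add.assoc)
          qed
        qed
        have B0: "0 \<le> real m ^ (n+3) * u^2" by simp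
        have "de_x m vn cn eps (Suc (t+n+2)) i \<le> real m * (real m ^ (n+3) * u^2)"
          using deg2_bound[OF e B0 i i2 kb] .
        also have "\<dots> = real m ^ (Suc n + 3) * u^2"
          by (simp only: mult.assoc[symmetric] power_Suc[symmetric] add_Suc)
        finally show ?thesis by simp
      qed
    qed
  qed
qed

lemma main_step:
  assumes e: "0 \<le> eps" "eps \<le> 1" and u: "0 \<le> u"
    and hb: "\<forall>s\<ge>t. \<forall>k<m. de_x m vn cn eps s k \<le> u"
  shows "\<forall>i<m. de_x m vn cn eps (t + m + 2) i \<le> real m ^ (m+3) * u^2"
proof (intro allI impI)
  fix i assume "i < m"
  then have "de_x m vn cn eps (t + m + 2) i \<le> real m ^ (m+3) * u^2 \<or>
          (\<exists>c. c m = i \<and> (\<forall>a\<le>m. c a < m) \<and> (\<forall>a<m. R (c a) (c (Suc a))))"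
    using Q[OF e u hb, of m] by blast
  then show "de_x m vn cn eps (t + m + 2) i \<le> real m ^ (m+3) * u^2"
    using no_long_chain by blast
qed

end

context pg begin

lemma dexp:
  assumes e: "0 \<le> eps" "eps \<le> 1" and m0: "0 < m"
    and T: "\<forall>i<m. de_x m vn cn eps T i \<le> 1/(2*(real m ^ (m+3)))"
  shows "\<forall>s \<ge> T + n*(m+2). \<forall>i<m. de_x m vn cn eps s i \<le> (1/real m ^ (m+3)) * (1/2)^(2^n)"
proof (induction n)
  case 0
  show ?case
  proof (intro allI impI)
    fix s i assume s: "T + 0*(m+2) \<le> s" and i: "i < m"
    have "de_x m vn cn eps s i \<le> de_x m vn cn eps T i" using de_x_dec[OF e] s by simp
    also have "\<dots> \<le> 1/(2*(real m ^ (m+3)))" using T i by blast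
    also have "\<dots> = (1/real m ^ (m+3)) * (1/2)^(2^0)" by simp
    finally show "de_x m vn cn eps s i \<le> (1/real m ^ (m+3)) * (1/2)^(2^0)" .
  qed
next
  case (Suc n)
  define A where "A = real m ^ (m+3)"
  have A0: "0 < A" unfolding A_def using m0 by simp
  define u where "u = (1/A) * (1/2)^(2^n)"
  have u0: "0 \<le> u" unfolding u_def using A0 by simp
  define t where "t = T + n*(m+2)"
  have hb: "\<forall>s\<ge>t. \<forall>k<m. de_x m vn cn eps s k \<le> u" using Suc.IH unfolding u_def A_def t_def by blast
  have ms: "\<forall>i<m. de_x m vn cn eps (t + m + 2) i \<le> A * u^2"
    using main_step[OF e u0 hb] unfolding A_def by blast
  have eq: "A * u^2 = (1/A) * (1/2)^(2^Suc n)"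
  proof -
    have "(1/2::real)^(2^Suc n) = ((1/2)^(2^n))^2" by (simp add: power_mult[symmetric] mult.commute)
    then show ?thesis unfolding u_def using A0 by (simp add: power2_eq_square field_simps)
  qed
  show ?case
  proof (intro allI impI)
    fix s i assume s: "T + Suc n*(m+2) \<le> s" and i: "i < m"
    have "t + m + 2 \<le> s" using s unfolding t_def by simp
    then have "de_x m vn cn eps s i \<le> de_x m vn cn eps (t + m + 2) i" using de_x_dec[OF e] by blast
    also have "\<dots> \<le> A * u^2" using ms i by blast
    finally show "de_x m vn cn eps s i \<le> (1/real m ^ (m+3)) * (1/2)^(2^Suc n)"
      using eq unfolding A_def by simp
  qed
qed

end

lemma final_real:
  fixes P T t n :: nat
  assumes P: "0 < P" and t: "T \<le> t" and n: "n = (t - T) div P"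
  shows "(1/2::real)^(2^n) \<le> exp (- (ln 2 * 2 powr (- (real T / real P) - 1)) * 2 powr (1 / real P * real t))"
proof -
  have dm: "t - T = n * P + (t - T) mod P" using n by simp
  have "(t - T) mod P < P" using P by simp
  then have "real (t - T) < real n * real P + real P" using dm
    by (metis add_less_cancel_left of_nat_add of_nat_less_iff of_nat_mult)
  then have "real t - real T < (real n + 1) * real P" using t by (simp add: of_nat_diff algebra_simps)
  then have "(real t - real T) / real P < real n + 1" using P by (simp add: divide_less_eq)
  then have ex: "1 / real P * real t + (- (real T / real P) - 1) \<le> real n"
    using P by (simp add: diff_divide_distrib[symmetric] field_simps)
  have "2 powr (- (real T / real P) - 1) * 2 powr (1 / real P * real t)
        = 2 powr (1 / real P * real t + (- (real T / real P) - 1))" by (simp add: powr_add)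
  also have "\<dots> \<le> 2 powr (real n)" using ex by (intro powr_mono) auto
  also have "\<dots> = 2 ^ n" by (simp add: powr_realpow)
  finally have le: "2 powr (- (real T / real P) - 1) * 2 powr (1 / real P * real t) \<le> 2 ^ n" .
  have "(1/2::real)^(2^n) = exp (real (2^n) * ln (1/2))"
    by (simp add: powr_realpow[symmetric] powr_def)
  also have "\<dots> = exp (- (ln 2 * 2 ^ n))" by (simp add: ln_div)
  also have "\<dots> \<le> exp (- (ln 2 * 2 powr (- (real T / real P) - 1)) * 2 powr (1 / real P * real t))"
    using le by (simp add: mult.assoc)
  finally show ?thesis .
qed

theorem theorem1:
  fixes V :: "'v set" and C :: "'c set" and m :: nat
    and vn :: "nat \<Rightarrow> 'v" and cn :: "nat \<Rightarrow> 'c"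
  assumes "protograph V C m vn cn"
    and "\<forall>v\<in>V. vdeg m vn v \<ge> 2"
    and "\<not> has_cycle_G2 m vn cn"
    and "\<forall>v\<in>V. vdeg m vn v = 2 \<longrightarrow>
           (\<exists>w\<in>V. vdeg m vn w \<ge> 3 \<and> (Inl v, Inl w) \<in> (adjG m vn cn)\<^sup>*)"
  shows "\<forall>eps. 0 \<le> eps \<and> eps < threshold m vn cn \<longrightarrow>
           (\<exists>\<alpha>>0. \<exists>\<beta>>0. \<exists>K>0. \<exists>t0::nat. \<forall>i<m. \<forall>t\<ge>t0.
              de_x m vn cn eps t i \<le> K * exp (- \<beta> * 2 powr (\<alpha> * real t)))"
proof (intro allI impI)
  fix eps assume h: "0 \<le> eps \<and> eps < threshold m vn cn"
  show "\<exists>\<alpha>>0. \<exists>\<beta>>0. \<exists>K>0. \<exists>t0::nat. \<forall>i<m. \<forall>t\<ge>t0.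
              de_x m vn cn eps t i \<le> K * exp (- \<beta> * 2 powr (\<alpha> * real t))"
  proof (cases "m = 0")
    case True then show ?thesis by (intro exI[of _ 1] conjI exI[of _ 0]) auto
  next
    case False
    then have m0: "0 < m" by simp
    interpret pg V C m vn cn using assms(1-3) by unfold_locales
    define S where "S = {eps. 0 \<le> eps \<and> eps \<le> 1 \<and>
               (\<lambda>t. Max ((\<lambda>i. de_x m vn cn eps t i) ` {..<m})) \<longlonglongrightarrow> 0}"
    have thr: "threshold m vn cn = Sup S" unfolding threshold_def S_def ..
    have z: "de_x m vn cn 0 t i = 0" for t i by (cases t) auto
    have "(\<lambda>i. de_x m vn cn 0 t i) ` {..<m} = {0}" for t using z m0 by auto
    then have "0 \<in> S" unfolding S_def by simp
    have bdd: "bdd_above S" unfolding S_def by (auto intro: bdd_aboveI[of _ 1])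
    obtain e' where e': "e' \<in> S" "eps < e'"
      using less_cSup_iff[of S eps] \<open>0 \<in> S\<close> bdd h thr by auto
    have e'1: "0 \<le> e'" "e' \<le> 1" and lim: "(\<lambda>t. Max ((\<lambda>i. de_x m vn cn e' t i) ` {..<m})) \<longlonglongrightarrow> 0"
      using e'(1) unfolding S_def by auto
    have e: "0 \<le> eps" "eps \<le> 1" using h e' e'1 by auto
    define A where "A = real m ^ (m+3)"
    have A1: "1 \<le> A" unfolding A_def using m0 by simp
    have "0 < 1/(2*A)" using A1 by simp
    then obtain T where T: "\<forall>t\<ge>T. norm (Max ((\<lambda>i. de_x m vn cn e' t i) ` {..<m}) - 0) < 1/(2*A)"
      using LIMSEQ_D[OF lim] by blast
    have Tb: "\<forall>i<m. de_x m vn cn eps T i \<le> 1/(2*(real m ^ (m+3)))"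
    proof (intro allI impI)
      fix i assume i: "i < m"
      have "de_x m vn cn eps T i \<le> de_x m vn cn e' T i"
        using de_x_mono_eps[of eps e'] e e' e'1 by simp
      also have "\<dots> \<le> Max ((\<lambda>i. de_x m vn cn e' T i) ` {..<m})"
        using i by (intro Max_ge) auto
      also have "\<dots> < 1/(2*A)" using T by auto
      finally show "de_x m vn cn eps T i \<le> 1/(2*(real m ^ (m+3)))" unfolding A_def by simp
    qed
    have D: "\<forall>s \<ge> T + n*(m+2). \<forall>i<m. de_x m vn cn eps s i \<le> (1/real m ^ (m+3)) * (1/2)^(2^n)" for n
      using dexp[OF e m0 Tb] by blast
    have main: "\<forall>i<m. \<forall>t\<ge>T. de_x m vn cn eps t i \<le> 1 * exp (- (ln 2 * 2 powr (- (real T / real (m+2)) - 1)) * 2 powr (1 / real (m+2) * real t))"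
    proof (intro allI impI)
      fix i t assume i: "i < m" and t: "T \<le> t"
      define n where "n = (t - T) div (m+2)"
      have "n*(m+2) \<le> t - T" unfolding n_def by (rule div_times_less_eq_dividend)
      then have "T + n*(m+2) \<le> t" using t by simp
      then have "de_x m vn cn eps t i \<le> (1/real m ^ (m+3)) * (1/2)^(2^n)" using D i by blast
      also have "\<dots> \<le> (1/2)^(2^n)" using A1 unfolding A_def
        by (intro mult_left_le_one_le) (auto simp: divide_le_eq)
      also have "\<dots> \<le> exp (- (ln 2 * 2 powr (- (real T / real (m+2)) - 1)) * 2 powr (1 / real (m+2) * real t))"
        using final_real[of "m+2" T t n] t n_def by simp
      finally show "de_x m vn cn eps t i \<le> 1 * exp (- (ln 2 * 2 powr (- (real T / real (m+2)) - 1)) * 2 powr (1 / real (m+2) * real t))"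
        by simp
    qed
    have a0: "0 < 1 / real (m+2)" by simp
    have b0: "0 < ln 2 * 2 powr (- (real T / real (m+2)) - 1)" by simp
    have k0: "0 < (1::real)" by simp
    show ?thesis using main a0 b0 k0 by blast
  qed
qed

end
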